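(* Let $\mathbb{S}\in\mathbb{Z}^{N_X\times N_e}$, let $\mathbb{V}\in\mathbb{R}^{N_e\times N_z}$ be a matrix whose columns form a basis of $\mathrm{Ker}\,\mathbb{S}$, let $\mathcal{X}=\mathbb{R}^{N_X}_{>0}$, and let $\{\Psi^*_x\}_{x\in\mathcal{X}}$ be a family of dissipation functions on $\mathbb{R}^{N_e}$ with conjugates $\Psi_x$. Fix $x\in\mathcal{X}$ and let the cycle spaces be $\mathcal{Z}_x:=\mathbb{R}^{N_z}$ and $\mathfrak{Z}_x:=\mathrm{Im}\,\mathbb{V}^T=\mathbb{R}^{N_z}$, with the standard pairing. For $\zeta\in\mathfrak{Z}_x$ let $f^\lozenge(x,\zeta)$ be the unique minimizer of $\Psi^*_x(f)$ over $\{f\in\mathbb{R}^{N_e}:\mathbb{V}^Tf=\zeta\}$, and define $$\hat{\Psi}_x(z):=\Psi_x(\mathbb{V}z)\ (z\in\mathcal{Z}_x),\qquad \hat{\Psi}^*_x(\zeta):=\Psi^*_x\big(f^\lozenge(x,\zeta)\big)\ (\zeta\in\mathfrak{Z}_x).$$ Then $\hat{\Psi}_x$ and $\hat{\Psi}^*_x$ are Legendre–Fenchel conjugates of each other, $\hat{\Psi}^*_x(\zeta)=\max_{z}[\langle z,\zeta\rangle-\hat{\Psi}_x(z)]$ and $\hat{\Psi}_x(z)=\max_{\zeta}[\langle z,\zeta\rangle-\hat{\Psi}^*_x(\zeta)]$; their gradients $\nabla\hat{\Psi}_x(z)=\mathbb{V}^T\nabla\Psi_x(\mathbb{V}z)$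 and $\nabla\hat{\Psi}^*_x$ are mutually inverse bijections between $\mathcal{Z}_x$ and $\mathfrak{Z}_x$ (with $\mathbb{V}\nabla\hat\Psi^*_x(\zeta)=\nabla\Psi^*_x(f^\lozenge(x,\zeta))$); and both $\hat{\Psi}_x$ and $\hat{\Psi}^*_x$ are dissipation functions (strictly convex, $1$-coercive, symmetric under sign change, vanishing at $0$). That is, the dissipation functions on the edge spaces induce a dually flat structure on the cycle spaces.
   Context: A dissipation function on $\mathbb{R}^{n}$ is a strictly convex, continuously differentiable, $1$-coercive ($\psi(f)/\|f\|\to\infty$ as $\|f\|\to\infty$), even function $\psi$ with $\psi(0)=0$. $\Psi_x(j):=\max_f[\langle j,f\rangle-\Psi^*_x(f)]$ is the Legendre–Fenchel conjugate of $\Psi^*_x$ (also a dissipation function), and $\nabla\Psi_x,\nabla\Psi^*_x$ are mutually inverse bijections of $\mathbb{R}^{N_e}$. Note $\mathrm{Ker}\,\mathbb{V}=\{0\}$, $\mathrm{Im}\,\mathbb{V}=\mathrm{Ker}\,\mathbb{S}$, $\mathrm{Ker}\,\mathbb{V}^T=\mathrm{Im}\,\mathbb{S}^T$. *)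

theory Defs
  imports "HOL-Analysis.Analysis"
begin

definition strictly_convex :: "('a::real_vector \<Rightarrow> real) \<Rightarrow> bool" where
  "strictly_convex \<psi> \<longleftrightarrow>
     (\<forall>x y t. x \<noteq> y \<longrightarrow> 0 < t \<longrightarrow> t < 1 \<longrightarrow>
        \<psi> ((1 - t) *\<^sub>R x + t *\<^sub>R y) < (1 - t) * \<psi> x + t * \<psi> y)"

definition has_gradient :: "('a::real_inner \<Rightarrow> real) \<Rightarrow> 'a \<Rightarrow> 'a \<Rightarrow> bool" where
  "has_gradient \<psi> g x \<longleftrightarrow> (\<psi> has_derivative (\<lambda>h. g \<bullet> h)) (at x)"

definition grad :: "('a::real_inner \<Rightarrow> real) \<Rightarrow> 'a \<Rightarrow> 'a" where
  "grad \<psi> x = (SOME g. has_gradient \<psi> g x)"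

definition dissipation :: "('a::euclidean_space \<Rightarrow> real) \<Rightarrow> bool" where
  "dissipation \<psi> \<longleftrightarrow>
     strictly_convex \<psi> \<and>
     (\<forall>x. \<exists>g. has_gradient \<psi> g x) \<and> continuous_on UNIV (grad \<psi>) \<and>
     filterlim (\<lambda>f. \<psi> f / norm f) at_top at_infinity \<and>
     (\<forall>f. \<psi> (- f) = \<psi> f) \<and>
     \<psi> 0 = 0"

definition is_max_value :: "('a \<Rightarrow> real) \<Rightarrow> real \<Rightarrow> bool" where
  "is_max_value \<phi> m \<longleftrightarrow> (\<forall>y. \<phi> y \<le> m) \<and> (\<exists>y. \<phi> y = m)"

definition f_diamond :: "(real^'e \<Rightarrow> real) \<Rightarrow> real^'z^'e \<Rightarrow> real^'z \<Rightarrow> real^'e" where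
  "f_diamond \<psi> V \<zeta> =
     (THE f. transpose V *v f = \<zeta> \<and> (\<forall>g. transpose V *v g = \<zeta> \<longrightarrow> \<psi> f \<le> \<psi> g))"

definition columns_basis_of_kernel :: "real^'z^'e \<Rightarrow> int^'e^'X \<Rightarrow> bool" where
  "columns_basis_of_kernel V S \<longleftrightarrow>
     inj (\<lambda>z. V *v z) \<and>
     range (\<lambda>z. V *v z) = {f. (\<chi> i j. real_of_int (S $ i $ j)) *v f = 0}"

end

theory Submission imports Defs begin

lemma grad_eq:
  fixes \<psi> :: "'a::euclidean_space \<Rightarrow> real"
  assumes "has_gradient \<psi> g x" shows "grad \<psi> x = g"
proof -
  have "has_gradient \<psi> (grad \<psi> x) x" unfolding grad_def using assms by (rule someI)
  then have "(\<lambda>h. grad \<psi> x \<bullet> h) = (\<lambda>h. g \<bullet> h)"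
    using assms unfolding has_gradient_def by (rule has_derivative_unique)
  then have "(grad \<psi> x - g) \<bullet> (grad \<psi> x - g) = 0"
    by (metis inner_diff_left right_minus_eq)
  then show ?thesis by simp
qed

lemma sc_convex_on:
  assumes "strictly_convex \<psi>" shows "convex_on UNIV \<psi>"
proof (rule convex_onI)
  fix t x y assume t: "(0::real) < t" "t < 1"
  show "\<psi> ((1 - t) *\<^sub>R x + t *\<^sub>R y) \<le> (1 - t) * \<psi> x + t * \<psi> y"
  proof (cases "x = y")
    case True then show ?thesis by (simp add: algebra_simps flip: scaleR_add_left)
  next
    case False then show ?thesis using assms t unfolding strictly_convex_def by (meson less_imp_le)
  qed
qed simp

lemma tangent_ineq:
  fixes \<phi> :: "'a::euclidean_space \<Rightarrow> real"
  assumes sc: "strictly_convex \<phi>" and g: "has_gradient \<phi> g f"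
  shows "\<phi> f + g \<bullet> (y - f) \<le> \<phi> y"
proof -
  define d where "d = y - f"
  define k where "k = (\<lambda>t::real. \<phi> (f + t *\<^sub>R d))"
  have cv: "convex_on UNIV k"
  proof (rule convex_onI)
    fix t a b :: real assume t: "0 < t" "t < 1"
    have "f + ((1 - t) * a + t * b) *\<^sub>R d = (1 - t) *\<^sub>R (f + a *\<^sub>R d) + t *\<^sub>R (f + b *\<^sub>R d)"
      by (simp add: algebra_simps)
    then show "k ((1 - t) *\<^sub>R a + t *\<^sub>R b) \<le> (1 - t) * k a + t * k b"
      unfolding k_def using convex_onD[OF sc_convex_on[OF sc], of t] t by simp
  qed simp
  have "((\<lambda>t. f + t *\<^sub>R d) has_derivative (\<lambda>t. t *\<^sub>R d)) (at 0)"
    by (auto intro!: derivative_eq_intros)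
  from has_derivative_compose[OF this, of \<phi> "\<lambda>h. g \<bullet> h"] g
  have "(k has_derivative (\<lambda>t. g \<bullet> (t *\<^sub>R d))) (at 0)"
    unfolding has_gradient_def k_def by simp
  moreover have "(\<lambda>t. g \<bullet> (t *\<^sub>R d)) = (\<lambda>t. (g \<bullet> d) * t)" by (rule ext) simp
  ultimately have "(k has_field_derivative (g \<bullet> d)) (at 0)"
    unfolding has_field_derivative_def by simp
  then have "k 1 - k 0 \<ge> (g \<bullet> d) * (1 - 0)"
    by (intro convex_on_imp_above_tangent[OF cv]) auto
  then show ?thesis unfolding k_def d_def by simp
qed

context
  fixes \<phi> :: "'a::euclidean_space \<Rightarrow> real"
  assumes D: "dissipation \<phi>"
begin

lemma D_sc: "strictly_convex \<phi>" using D unfolding dissipation_def by blast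
lemma D_grad: "has_gradient \<phi> (grad \<phi> f) f"
  using D unfolding dissipation_def grad_def by (meson someI)
lemma D_gcont: "continuous_on UNIV (grad \<phi>)" using D unfolding dissipation_def by blast
lemma D_coer: "filterlim (\<lambda>f. \<phi> f / norm f) at_top at_infinity" using D unfolding dissipation_def by blast
lemma D_even: "\<phi> (- f) = \<phi> f" using D unfolding dissipation_def by blast
lemma D_zero: "\<phi> 0 = 0" using D unfolding dissipation_def by blast

lemma D_cont: "continuous_on UNIV \<phi>"
proof -
  have "isCont \<phi> f" for f
    using D_grad[of f] unfolding has_gradient_def by (rule has_derivative_continuous)
  then show ?thesis by (simp add: continuous_at_imp_continuous_on)
qed

lemma D_nonneg: "0 \<le> \<phi> f"
proof -
  have "\<phi> ((1 - 1/2) *\<^sub>R f + (1/2) *\<^sub>R (- f)) \<le> (1 - 1/2) * \<phi> f + (1/2) * \<phi> (- f)"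
    using convex_onD[OF sc_convex_on[OF D_sc], of "1/2" f "-f"] by simp
  then show ?thesis by (simp add: D_even D_zero)
qed

lemma D_max_exists: "\<exists>f. \<forall>y. j \<bullet> y - \<phi> y \<le> j \<bullet> f - \<phi> f"
proof -
  have "eventually (\<lambda>f. norm j + 1 \<le> \<phi> f / norm f) at_infinity"
    using D_coer unfolding filterlim_at_top by blast
  then obtain b where b: "\<And>y. b \<le> norm y \<Longrightarrow> norm j + 1 \<le> \<phi> y / norm y"
    unfolding eventually_at_infinity by blast
  define R where "R = max b 1"
  have out: "j \<bullet> y - \<phi> y < 0" if "R \<le> norm y" for y
  proof -
    have ny: "norm y > 0" using that unfolding R_def by auto
    have "(norm j + 1) * norm y \<le> \<phi> y"
      using b[of y] that ny unfolding R_def by (simp add: pos_le_divide_eq)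
    moreover have "j \<bullet> y \<le> norm j * norm y" by (simp add: norm_cauchy_schwarz)
    moreover have "(norm j + 1) * norm y = norm j * norm y + norm y" by (simp add: algebra_simps)
    ultimately show ?thesis using ny by linarith
  qed
  have "continuous_on (cball 0 R) (\<lambda>y. j \<bullet> y - \<phi> y)"
    using D_cont by (auto intro!: continuous_intros intro: continuous_on_subset)
  then obtain f where f: "f \<in> cball 0 R" "\<And>y. y \<in> cball 0 R \<Longrightarrow> j \<bullet> y - \<phi> y \<le> j \<bullet> f - \<phi> f"
    using continuous_attains_sup[of "cball 0 R" "\<lambda>y. j \<bullet> y - \<phi> y"] unfolding R_def by auto
  have "0 \<le> j \<bullet> f - \<phi> f" using f(2)[of 0] D_zero unfolding R_def by simp
  then have "j \<bullet> y - \<phi> y \<le> j \<bullet> f - \<phi> f" for y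
    using f(2)[of y] out[of y] by (cases "norm y \<le> R") auto
  then show ?thesis by blast
qed

lemma D_crit:
  assumes "\<And>y. j \<bullet> y - \<phi> y \<le> j \<bullet> f - \<phi> f"
  shows "grad \<phi> f = j"
proof -
  have "((\<lambda>y. j \<bullet> y - \<phi> y) has_derivative (\<lambda>v. j \<bullet> v - grad \<phi> f \<bullet> v)) (at f)"
    using D_grad[of f] unfolding has_gradient_def by (auto intro!: derivative_eq_intros)
  from differential_zero_maxmin[OF UNIV_I open_UNIV this] assms
  have "(\<lambda>v. j \<bullet> v - grad \<phi> f \<bullet> v) = (\<lambda>v. 0)" by blast
  then have "j \<bullet> (j - grad \<phi> f) - grad \<phi> f \<bullet> (j - grad \<phi> f) = 0" by metis
  then have "(j - grad \<phi> f) \<bullet> (j - grad \<phi> f) = 0" by (simp add: inner_diff_left)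
  then show ?thesis by simp
qed

lemma D_tanmax:
  assumes "grad \<phi> f = j"
  shows "j \<bullet> y - \<phi> y \<le> j \<bullet> f - \<phi> f"
  using tangent_ineq[OF D_sc D_grad[of f], of y] assms by (simp add: inner_diff_right)

lemma D_uniq:
  assumes "\<And>y. j \<bullet> y - \<phi> y \<le> j \<bullet> f1 - \<phi> f1" "\<And>y. j \<bullet> y - \<phi> y \<le> j \<bullet> f2 - \<phi> f2"
  shows "f1 = f2"
proof (rule ccontr)
  assume ne: "f1 \<noteq> f2"
  define m where "m = (1 - 1/2) *\<^sub>R f1 + (1/2::real) *\<^sub>R f2"
  have "\<forall>x y t. x \<noteq> y \<longrightarrow> 0 < t \<longrightarrow> t < 1 \<longrightarrow>
        \<phi> ((1 - t) *\<^sub>R x + t *\<^sub>R y) < (1 - t) * \<phi> x + t * \<phi> y"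
    using D_sc unfolding strictly_convex_def .
  from this[rule_format, OF ne, of "1/2"]
  have "\<phi> m < (1 - 1/2) * \<phi> f1 + (1/2) * \<phi> f2" unfolding m_def by simp
  moreover have "j \<bullet> m = (1/2) * (j \<bullet> f1) + (1/2) * (j \<bullet> f2)"
    unfolding m_def by (simp add: inner_add_right)
  moreover have "j \<bullet> f1 - \<phi> f1 = j \<bullet> f2 - \<phi> f2" using assms(1)[of f2] assms(2)[of f1] by linarith
  ultimately have "j \<bullet> m - \<phi> m > j \<bullet> f1 - \<phi> f1" by simp
  then show False using assms(1)[of m] by simp
qed

lemma D_grad_inj: assumes g: "grad \<phi> f1 = grad \<phi> f2" shows "f1 = f2"
  by (rule D_uniq[of "grad \<phi> f1"]) (rule D_tanmax, simp add: g)+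

lemma D_grad_surj: "\<exists>f. grad \<phi> f = j"
proof -
  obtain f where "\<forall>y. j \<bullet> y - \<phi> y \<le> j \<bullet> f - \<phi> f" using D_max_exists by blast
  then have "grad \<phi> f = j" by (intro D_crit) blast
  then show ?thesis by blast
qed

end


context
  fixes \<phi> \<psi> :: "'a::euclidean_space \<Rightarrow> real"
  assumes D: "dissipation \<phi>"
    and C: "\<And>j. is_max_value (\<lambda>f. j \<bullet> f - \<phi> f) (\<psi> j)"
begin

definition "G = inv (grad \<phi>)"

lemma surjg: "surj (grad \<phi>)"
  unfolding surj_def using D_grad_surj[OF D] by metis

lemma G1: "grad \<phi> (G j) = j"
  unfolding G_def by (rule surj_f_inv_f[OF surjg])

lemma G2: "G (grad \<phi> f) = f"
  unfolding G_def by (meson D D_grad_inj inj_onI inv_f_f)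

lemma G_max: "j \<bullet> y - \<phi> y \<le> j \<bullet> G j - \<phi> (G j)"
  using D_tanmax[OF D G1] .

lemma psi_eq: "\<psi> j = j \<bullet> G j - \<phi> (G j)"
proof -
  obtain y where y: "\<forall>f. j \<bullet> f - \<phi> f \<le> \<psi> j" "j \<bullet> y - \<phi> y = \<psi> j"
    using C[of j] unfolding is_max_value_def by blast
  have "y = G j"
    by (rule D_uniq[OF D, of j]) (use y G_max in auto)
  then show ?thesis using y by simp
qed

lemma psi_ge: "j \<bullet> f - \<phi> f \<le> \<psi> j"
  using C[of j] unfolding is_max_value_def by blast

lemma G_cont: "continuous_on UNIV G"
proof -
  have "continuous_on (range (grad \<phi>)) G"
    by (rule continuous_on_inverse_open[OF open_UNIV D_gcont[OF D]]) (auto simp: G2)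
  moreover have "range (grad \<phi>) = UNIV" using surjg by simp
  ultimately show ?thesis by simp
qed

lemma psi_grad: "has_gradient \<psi> (G j) j"
proof -
  have bnd: "norm (\<psi> y - \<psi> j - G j \<bullet> (y - j)) / norm (y - j) \<le> norm (G y - G j) * 1" for y
  proof -
    have e1: "G j \<bullet> (y - j) = y \<bullet> G j - j \<bullet> G j" by (subst inner_commute) (rule inner_diff_left)
    have e2: "(y - j) \<bullet> (G y - G j) = y \<bullet> G y - j \<bullet> G y - y \<bullet> G j + j \<bullet> G j"
      by (simp add: inner_diff_right inner_diff_left)
    have l: "0 \<le> \<psi> y - \<psi> j - G j \<bullet> (y - j)"
      using psi_ge[of y "G j"] psi_eq[of j] e1 by linarith
    have u: "\<psi> y - \<psi> j - G j \<bullet> (y - j) \<le> (y - j) \<bullet> (G y - G j)"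
      using psi_ge[of j "G y"] psi_eq[of y] psi_eq[of j] e1 e2 by linarith
    also have "\<dots> \<le> norm (y - j) * norm (G y - G j)" by (rule norm_cauchy_schwarz)
    finally have "norm (\<psi> y - \<psi> j - G j \<bullet> (y - j)) \<le> norm (y - j) * norm (G y - G j)"
      using l by simp
    then show ?thesis
      by (cases "y = j") (auto simp: divide_le_eq mult.commute)
  qed
  have "isCont G j" using G_cont by (simp add: continuous_on_eq_continuous_at)
  then have "((\<lambda>y. G y - G j) \<longlongrightarrow> 0) (at j)"
    by (simp add: isCont_def LIM_zero)
  then have "((\<lambda>y. norm (\<psi> y - \<psi> j - G j \<bullet> (y - j)) / norm (y - j)) \<longlongrightarrow> 0) (at j)"
    by (rule tendsto_0_le[where K=1]) (use bnd in auto)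
  then show ?thesis
    unfolding has_gradient_def has_derivative_iff_norm
    by (auto intro: bounded_linear_inner_right)
qed

lemma grad_psi: "grad \<psi> j = G j"
  using grad_eq[OF psi_grad] .

lemma psi_sc: "strictly_convex \<psi>"
  unfolding strictly_convex_def
proof (intro allI impI)
  fix j1 j2 :: 'a and t :: real
  assume ne: "j1 \<noteq> j2" and t: "0 < t" "t < 1"
  define jt where "jt = (1 - t) *\<^sub>R j1 + t *\<^sub>R j2"
  define f where "f = G jt"
  have e: "\<psi> jt = (1 - t) * (j1 \<bullet> f - \<phi> f) + t * (j2 \<bullet> f - \<phi> f)"
    unfolding psi_eq f_def jt_def by (simp add: inner_add_left algebra_simps)
  have a1: "j1 \<bullet> f - \<phi> f \<le> \<psi> j1" and a2: "j2 \<bullet> f - \<phi> f \<le> \<psi> j2" by (rule psi_ge)+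
  have "\<not> (j1 \<bullet> f - \<phi> f = \<psi> j1 \<and> j2 \<bullet> f - \<phi> f = \<psi> j2)"
  proof
    assume h: "j1 \<bullet> f - \<phi> f = \<psi> j1 \<and> j2 \<bullet> f - \<phi> f = \<psi> j2"
    have "grad \<phi> f = j1" by (rule D_crit[OF D]) (use h psi_ge in auto)
    moreover have "grad \<phi> f = j2" by (rule D_crit[OF D]) (use h psi_ge in auto)
    ultimately show False using ne by simp
  qed
  then have "j1 \<bullet> f - \<phi> f < \<psi> j1 \<or> j2 \<bullet> f - \<phi> f < \<psi> j2" using a1 a2 by linarith
  then have "(1 - t) * (j1 \<bullet> f - \<phi> f) + t * (j2 \<bullet> f - \<phi> f) < (1 - t) * \<psi> j1 + t * \<psi> j2"
  proof
    assume "j1 \<bullet> f - \<phi> f < \<psi> j1"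
    then have "(1 - t) * (j1 \<bullet> f - \<phi> f) < (1 - t) * \<psi> j1" using t by simp
    moreover have "t * (j2 \<bullet> f - \<phi> f) \<le> t * \<psi> j2" using a2 t by simp
    ultimately show ?thesis by linarith
  next
    assume "j2 \<bullet> f - \<phi> f < \<psi> j2"
    then have "t * (j2 \<bullet> f - \<phi> f) < t * \<psi> j2" using t by simp
    moreover have "(1 - t) * (j1 \<bullet> f - \<phi> f) \<le> (1 - t) * \<psi> j1" using a1 t by simp
    ultimately show ?thesis by linarith
  qed
  then show "\<psi> ((1 - t) *\<^sub>R j1 + t *\<^sub>R j2) < (1 - t) * \<psi> j1 + t * \<psi> j2"
    using e unfolding jt_def by simp
qed

lemma psi_even: "\<psi> (- j) = \<psi> j"
proof -
  have "\<psi> (- j) \<le> \<psi> j"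
    using psi_eq[of "-j"] psi_ge[of j "- G (-j)"] D_even[OF D, of "G (-j)"] by simp
  moreover have "\<psi> j \<le> \<psi> (- j)"
    using psi_eq[of j] psi_ge[of "-j" "- G j"] D_even[OF D, of "G j"] by simp
  ultimately show ?thesis by simp
qed

lemma psi_zero: "\<psi> 0 = 0"
  using psi_eq[of 0] psi_ge[of 0 0] D_zero[OF D] D_nonneg[OF D, of "G 0"] by simp

lemma psi_coer: "filterlim (\<lambda>j. \<psi> j / norm j) at_top at_infinity"
  unfolding filterlim_at_top
proof
  fix Z :: real
  define R where "R = max Z 0 + 1"
  have "continuous_on (cball 0 R) \<phi>" using D_cont[OF D] by (rule continuous_on_subset) simp
  then obtain M where M: "\<And>y. y \<in> cball 0 R \<Longrightarrow> \<phi> y \<le> M"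
    using continuous_attains_sup[of "cball 0 R" \<phi>] unfolding R_def by force
  have "Z \<le> \<psi> j / norm j" if nj: "\<bar>M\<bar> + 1 \<le> norm j" for j
  proof -
    have jp: "norm j > 0" using nj by linarith
    define y where "y = (R / norm j) *\<^sub>R j"
    have ny: "norm y = R" unfolding y_def using jp by (simp add: R_def)
    have jy: "j \<bullet> y = R * norm j"
      unfolding y_def using jp by (simp add: power2_norm_eq_inner[symmetric] power2_eq_square)
    have "R * norm j - M \<le> \<psi> j"
      using psi_ge[of j y] M[of y] ny jy by simp
    then have "(R * norm j - M) / norm j \<le> \<psi> j / norm j"
      using jp by (simp add: divide_right_mono)
    moreover have "R - M / norm j = (R * norm j - M) / norm j" using jp by (simp add: field_simps)
    ultimately have "R - M / norm j \<le> \<psi> j / norm j" by simp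
    moreover have "M / norm j \<le> 1" using jp nj by (simp add: divide_le_eq)
    ultimately show ?thesis unfolding R_def by linarith
  qed
  then show "eventually (\<lambda>j. Z \<le> \<psi> j / norm j) at_infinity"
    unfolding eventually_at_infinity by blast
qed

lemma psi_diss: "dissipation \<psi>"
  unfolding dissipation_def
  using psi_sc psi_grad psi_coer psi_even psi_zero G_cont
  by (auto simp: grad_psi[abs_def])

lemma inv1: "grad \<psi> (grad \<phi> f) = f" by (simp add: grad_psi G2)
lemma inv2: "grad \<phi> (grad \<psi> j) = j" by (simp add: grad_psi G1)
lemma psi_eq': "\<psi> j = j \<bullet> grad \<psi> j - \<phi> (grad \<psi> j)" by (simp add: grad_psi psi_eq)

lemma biconj: "is_max_value (\<lambda>j. f \<bullet> j - \<psi> j) (\<phi> f)"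
  unfolding is_max_value_def
proof
  show "\<forall>j. f \<bullet> j - \<psi> j \<le> \<phi> f" using psi_ge by (simp add: inner_commute) (smt (verit))
  show "\<exists>j. f \<bullet> j - \<psi> j = \<phi> f"
    by (rule exI[of _ "grad \<phi> f"]) (simp add: psi_eq G2 inner_commute)
qed

end


lemma adj: "(V *v z) \<bullet> f = z \<bullet> (transpose V *v f)" for V :: "real^'z^'e"
  by (metis dot_lmul_matrix inner_commute transpose_matrix_vector)

lemma restr_grad:
  fixes V :: "real^'z^'e" and \<phi> :: "real^'e \<Rightarrow> real"
  assumes D: "dissipation \<phi>"
  shows "has_gradient (\<lambda>z. \<phi> (V *v z)) (transpose V *v grad \<phi> (V *v z)) z"
proof -
  have "((*v) V has_derivative (*v) V) (at z)"
    by (simp add: bounded_linear_imp_has_derivative)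
  from has_derivative_compose[OF this, of \<phi> "\<lambda>h. grad \<phi> (V *v z) \<bullet> h"] D_grad[OF D, of "V *v z"]
  have "((\<lambda>z. \<phi> (V *v z)) has_derivative (\<lambda>h. grad \<phi> (V *v z) \<bullet> (V *v h))) (at z)"
    unfolding has_gradient_def by simp
  moreover have "(\<lambda>h. grad \<phi> (V *v z) \<bullet> (V *v h)) = (\<lambda>h. (transpose V *v grad \<phi> (V *v z)) \<bullet> h)"
    by (rule ext) (metis adj inner_commute)
  ultimately show ?thesis unfolding has_gradient_def by simp
qed

lemma restr_diss:
  fixes V :: "real^'z^'e" and \<phi> :: "real^'e \<Rightarrow> real"
  assumes D: "dissipation \<phi>" and inj: "inj ((*v) V)"
  shows "dissipation (\<lambda>z. \<phi> (V *v z))"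
proof -
  let ?h = "\<lambda>z. \<phi> (V *v z)"
  have gr: "grad ?h = (\<lambda>z. transpose V *v grad \<phi> (V *v z))"
    by (rule ext, rule grad_eq, rule restr_grad[OF D])
  have sc: "strictly_convex ?h"
    unfolding strictly_convex_def
  proof (intro allI impI)
    fix a b :: "real^'z" and t :: real
    assume "a \<noteq> b" "0 < t" "t < 1"
    moreover have "V *v a \<noteq> V *v b" using \<open>a \<noteq> b\<close> inj by (meson injD)
    ultimately show "?h ((1 - t) *\<^sub>R a + t *\<^sub>R b) < (1 - t) * ?h a + t * ?h b"
      using D_sc[OF D] unfolding strictly_convex_def
      by (simp add: matrix_vector_right_distrib matrix_vector_mult_scaleR)
  qed
  have cont: "continuous_on UNIV (grad ?h)"
  proof -
    have c1: "continuous_on UNIV (\<lambda>z. grad \<phi> (V *v z))"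
      by (rule continuous_on_compose2[OF D_gcont[OF D]]) (auto intro: continuous_intros)
    have "continuous_on UNIV (\<lambda>z. transpose V *v grad \<phi> (V *v z))"
      by (rule continuous_on_compose2[OF matrix_vector_mult_linear_continuous_on c1]) auto
    then show ?thesis unfolding gr .
  qed
  obtain B where B: "B > 0" "\<And>z. B * norm z \<le> norm (V *v z)"
    using linear_inj_bounded_below_pos[of "(*v) V"] inj by auto
  have coer: "filterlim (\<lambda>z. ?h z / norm z) at_top at_infinity"
    unfolding filterlim_at_top
  proof
    fix Z :: real
    obtain b where b: "\<And>y. b \<le> norm y \<Longrightarrow> max Z 0 / B \<le> \<phi> y / norm y"
      using D_coer[OF D] unfolding filterlim_at_top eventually_at_infinity by blast
    have "Z \<le> ?h z / norm z" if nz: "max b 1 / B \<le> norm z" for z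
    proof -
      have "max b 1 \<le> B * norm z" using nz B(1) by (simp add: divide_le_eq mult.commute)
      then have nv: "max b 1 \<le> norm (V *v z)" using B(2)[of z] by linarith
      have zp: "norm z > 0" using nz B(1) by (smt (verit, ccfv_SIG) divide_pos_pos)
      have vp: "norm (V *v z) > 0" using nv by linarith
      have "max Z 0 / B \<le> \<phi> (V *v z) / norm (V *v z)" using b nv by simp
      then have "max Z 0 / B * norm (V *v z) \<le> \<phi> (V *v z)" using vp by (simp add: le_divide_eq)
      moreover have "max Z 0 / B * (B * norm z) \<le> max Z 0 / B * norm (V *v z)"
        using B by (intro mult_left_mono) auto
      moreover have "max Z 0 / B * (B * norm z) = max Z 0 * norm z" using B(1) by simp
      ultimately have "max Z 0 * norm z \<le> \<phi> (V *v z)" by linarith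
      then have "max Z 0 \<le> \<phi> (V *v z) / norm z" using zp by (simp add: le_divide_eq)
      then show ?thesis by linarith
    qed
    then show "eventually (\<lambda>z. Z \<le> ?h z / norm z) at_infinity"
      unfolding eventually_at_infinity by blast
  qed
  have ev: "?h (- z) = ?h z" for z
    using D_even[OF D, of "V *v z"] by (simp add: linear_neg[OF matrix_vector_mul_linear])
  show ?thesis
    unfolding dissipation_def using sc cont coer ev D_zero[OF D] restr_grad[OF D] by auto
qed

lemma constr_uniq:
  fixes \<phi> :: "real^'e \<Rightarrow> real" and M :: "real^'e^'z"
  assumes sc: "strictly_convex \<phi>"
    and c: "M *v f1 = \<zeta>" "M *v f2 = \<zeta>"
    and m1: "\<forall>g. M *v g = \<zeta> \<longrightarrow> \<phi> f1 \<le> \<phi> g"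
    and m2: "\<forall>g. M *v g = \<zeta> \<longrightarrow> \<phi> f2 \<le> \<phi> g"
  shows "f1 = f2"
proof (rule ccontr)
  assume ne: "f1 \<noteq> f2"
  define m where "m = (1 - 1/2) *\<^sub>R f1 + (1/2::real) *\<^sub>R f2"
  have "\<forall>x y t. x \<noteq> y \<longrightarrow> 0 < t \<longrightarrow> t < 1 \<longrightarrow>
        \<phi> ((1 - t) *\<^sub>R x + t *\<^sub>R y) < (1 - t) * \<phi> x + t * \<phi> y"
    using sc unfolding strictly_convex_def .
  from this[rule_format, OF ne, of "1/2"]
  have "\<phi> m < (1 - 1/2) * \<phi> f1 + (1/2) * \<phi> f2" unfolding m_def by simp
  moreover have "M *v m = \<zeta>" unfolding m_def using c
    by (simp add: matrix_vector_right_distrib matrix_vector_mult_scaleR flip: scaleR_add_left)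
  moreover have "\<phi> f1 = \<phi> f2" using m1[rule_format, OF c(2)] m2[rule_format, OF c(1)] by linarith
  ultimately show False using m1 by fastforce
qed

theorem mainTheorem12:
  fixes S :: "int^'e^'X"
    and V :: "real^'z^'e"
    and Psi_star Psi :: "real^'X \<Rightarrow> real^'e \<Rightarrow> real"
    and x :: "real^'X"
  assumes V_basis: "columns_basis_of_kernel V S"
    and diss: "\<And>y. (\<forall>i. 0 < y $ i) \<Longrightarrow> dissipation (Psi_star y)"
    and conj: "\<And>y j. (\<forall>i. 0 < y $ i) \<Longrightarrow>
                 is_max_value (\<lambda>f. j \<bullet> f - Psi_star y f) (Psi y j)"
    and x_pos: "\<forall>i. 0 < x $ i"
  defines "Psi_hat \<equiv> (\<lambda>z. Psi x (V *v z))"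
    and "Psi_star_hat \<equiv> (\<lambda>\<zeta>. Psi_star x (f_diamond (Psi_star x) V \<zeta>))"
  shows "(\<forall>\<zeta>. \<exists>!f. transpose V *v f = \<zeta> \<and>
                 (\<forall>g. transpose V *v g = \<zeta> \<longrightarrow> Psi_star x f \<le> Psi_star x g))
      \<and> (\<forall>\<zeta>. is_max_value (\<lambda>z. z \<bullet> \<zeta> - Psi_hat z) (Psi_star_hat \<zeta>))
      \<and> (\<forall>z. is_max_value (\<lambda>\<zeta>. z \<bullet> \<zeta> - Psi_star_hat \<zeta>) (Psi_hat z))
      \<and> (\<forall>z. has_gradient Psi_hat (transpose V *v grad (Psi x) (V *v z)) z)
      \<and> (\<forall>\<zeta>. has_gradient Psi_star_hat (grad Psi_star_hat \<zeta>) \<zeta>)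
      \<and> (\<forall>\<zeta>. V *v grad Psi_star_hat \<zeta> = grad (Psi_star x) (f_diamond (Psi_star x) V \<zeta>))
      \<and> bij (grad Psi_hat) \<and> bij (grad Psi_star_hat)
      \<and> (\<forall>z. grad Psi_star_hat (grad Psi_hat z) = z)
      \<and> (\<forall>\<zeta>. grad Psi_hat (grad Psi_star_hat \<zeta>) = \<zeta>)
      \<and> dissipation Psi_hat \<and> dissipation Psi_star_hat"
proof -
  have DS: "dissipation (Psi_star x)" using diss x_pos by blast
  have CS: "\<And>j. is_max_value (\<lambda>f. j \<bullet> f - Psi_star x f) (Psi x j)" using conj x_pos by blast
  have DP: "dissipation (Psi x)" by (rule psi_diss[OF DS CS])
  have injV: "inj ((*v) V)" using V_basis unfolding columns_basis_of_kernel_def by simp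
  have DH: "dissipation Psi_hat" unfolding Psi_hat_def by (rule restr_diss[OF DP injV])
  have gH: "grad Psi_hat z = transpose V *v grad (Psi x) (V *v z)" for z
    unfolding Psi_hat_def by (rule grad_eq, rule restr_grad[OF DP])
  have key: "transpose V *v grad (Psi x) (V *v z0) = \<zeta>
      \<and> (\<forall>g. transpose V *v g = \<zeta> \<longrightarrow> Psi_star x (grad (Psi x) (V *v z0)) \<le> Psi_star x g)
      \<and> Psi_star x (grad (Psi x) (V *v z0)) = z0 \<bullet> \<zeta> - Psi_hat z0"
    if z0: "grad Psi_hat z0 = \<zeta>" for z0 \<zeta>
  proof -
    define f0 where "f0 = grad (Psi x) (V *v z0)"
    have c0: "transpose V *v f0 = \<zeta>" using z0 gH unfolding f0_def by simp
    have val: "Psi_star x f0 = z0 \<bullet> \<zeta> - Psi_hat z0"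
      using psi_eq'[OF DS CS, of "V *v z0"] adj[of V z0 f0] c0
      unfolding f0_def Psi_hat_def by simp
    have "\<forall>g. transpose V *v g = \<zeta> \<longrightarrow> Psi_star x f0 \<le> Psi_star x g"
    proof (intro allI impI)
      fix g assume "transpose V *v g = \<zeta>"
      then show "Psi_star x f0 \<le> Psi_star x g"
        using psi_ge[OF DS CS, of "V *v z0" g] adj[of V z0 g] val
        unfolding Psi_hat_def by simp
    qed
    then show ?thesis using c0 val unfolding f0_def by blast
  qed
  have ex_z: "\<exists>z0. grad Psi_hat z0 = \<zeta>" for \<zeta> using D_grad_surj[OF DH] .
  have uniq: "\<exists>!f. transpose V *v f = \<zeta> \<and>
                 (\<forall>g. transpose V *v g = \<zeta> \<longrightarrow> Psi_star x f \<le> Psi_star x g)" for \<zeta>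
  proof -
    obtain z0 where "grad Psi_hat z0 = \<zeta>" using ex_z by blast
    from key[OF this] show ?thesis
      using constr_uniq[OF D_sc[OF DS]] by blast
  qed
  have fd: "f_diamond (Psi_star x) V \<zeta> = grad (Psi x) (V *v z0)"
    and psh: "Psi_star_hat \<zeta> = z0 \<bullet> \<zeta> - Psi_hat z0"
    if z0: "grad Psi_hat z0 = \<zeta>" for z0 \<zeta>
  proof -
    show fd: "f_diamond (Psi_star x) V \<zeta> = grad (Psi x) (V *v z0)"
      unfolding f_diamond_def by (rule the1_equality[OF uniq]) (use key[OF z0] in blast)
    show "Psi_star_hat \<zeta> = z0 \<bullet> \<zeta> - Psi_hat z0"
      unfolding Psi_star_hat_def fd using key[OF z0] by blast
  qed
  have CH: "is_max_value (\<lambda>z. \<zeta> \<bullet> z - Psi_hat z) (Psi_star_hat \<zeta>)" for \<zeta>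
  proof -
    obtain z0 where z0: "grad Psi_hat z0 = \<zeta>" using ex_z by blast
    show ?thesis unfolding is_max_value_def psh[OF z0]
      using D_tanmax[OF DH z0] by (auto simp: inner_commute)
  qed
  have CH': "is_max_value (\<lambda>z. z \<bullet> \<zeta> - Psi_hat z) (Psi_star_hat \<zeta>)" for \<zeta>
    using CH[of \<zeta>] by (simp add: inner_commute)
  have DSH: "dissipation Psi_star_hat" by (rule psi_diss[OF DH CH])
  have i1: "grad Psi_star_hat (grad Psi_hat z) = z" for z by (rule inv1[OF DH CH])
  have i2: "grad Psi_hat (grad Psi_star_hat \<zeta>) = \<zeta>" for \<zeta> by (rule inv2[OF DH CH])
  have bij1: "bij (grad Psi_hat)" by (rule o_bij[of "grad Psi_star_hat"]) (auto simp: i1 i2)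
  have bij2: "bij (grad Psi_star_hat)" by (rule o_bij[of "grad Psi_hat"]) (auto simp: i1 i2)
  have six: "V *v grad Psi_star_hat \<zeta> = grad (Psi_star x) (f_diamond (Psi_star x) V \<zeta>)" for \<zeta>
  proof -
    have z0: "grad Psi_hat (grad Psi_star_hat \<zeta>) = \<zeta>" by (rule i2)
    show ?thesis unfolding fd[OF z0] using inv2[OF DS CS] by simp
  qed
  have bic: "is_max_value (\<lambda>\<zeta>. z \<bullet> \<zeta> - Psi_star_hat \<zeta>) (Psi_hat z)" for z
    by (rule biconj[OF DH CH])
  have g4: "has_gradient Psi_hat (transpose V *v grad (Psi x) (V *v z)) z" for z
    unfolding Psi_hat_def by (rule restr_grad[OF DP])
  have g5: "has_gradient Psi_star_hat (grad Psi_star_hat \<zeta>) \<zeta>" for \<zeta>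
    by (rule D_grad[OF DSH])
  show ?thesis
    using uniq CH' bic g4 g5 six bij1 bij2 i1 i2 DH DSH by blast
qed

end
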